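(* Let $x<y$ be real numbers. For every convex function $f:[x,y]\to\mathbb{R}$ the following inequalities are satisfied: $$\frac{3}{(y-x)^2}\int_x^y\int_x^y f\left(\frac{s+t}{2}\right)ds\,dt\leq\frac{2}{y-x}\int_x^y f(t)\,dt+f\left(\frac{x+y}{2}\right)$$ and $$\frac{4}{y-x}\int_x^y f(t)\,dt\leq\frac{3}{(y-x)^2}\int_x^y\int_x^y f\left(\frac{s+t}{2}\right)ds\,dt+\frac{f(x)+f(y)}{2}.$$ *)

theory Defs
  imports "HOL-Analysis.Analysis"
begin

end

theory Submission
  imports Defs "HOL-Analysis.Analysis"
begin
lemma bdd_cont_integrable:
  fixes h :: "real \<Rightarrow> real"
  assumes "a \<le> b" "continuous_on {a<..<b} h" "\<And>u. u \<in> {a..b} \<Longrightarrow> \<bar>h u\<bar> \<le> B"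
  shows "h integrable_on {a..b}"
proof -
  have "h integrable_on {a<..<b}"
  proof (rule measurable_bounded_by_integrable_imp_integrable_real)
    show "h \<in> borel_measurable (lebesgue_on {a<..<b})"
      by (rule continuous_imp_measurable_on_sets_lebesgue[OF assms(2)]) auto
    show "(\<lambda>_. B) integrable_on {a<..<b}"
      by (rule integrable_on_const) auto
    show "\<And>u. u \<in> {a<..<b} \<Longrightarrow> \<bar>h u\<bar> \<le> B" using assms(3) by auto
  qed auto
  then show ?thesis
    by (rule integrable_spike_set) (auto intro: negligible_subset[of "{a,b}"])
qed
lemma indef_deriv:
  fixes f :: "real \<Rightarrow> real"
  assumes "f integrable_on {a..b}" "continuous_on {a<..<b} f" "z \<in> {a<..<b}"
  shows "((\<lambda>u. integral {a..u} f) has_real_derivative f z) (at z)"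
proof -
  have "isCont f z" using assms(2,3) by (simp add: continuous_on_eq_continuous_at)
  then have c: "continuous (at z within ({a..b} - {})) f"
    using continuous_at_imp_continuous_within by blast
  have "((\<lambda>u. integral {a..u} f) has_vector_derivative f z) (at z within ({a..b} - {}))"
    by (rule integral_has_vector_derivative_continuous_at[OF assms(1) _ _ c]) (use assms(3) in auto)
  then have "((\<lambda>u. integral {a..u} f) has_vector_derivative f z) (at z)"
    using assms(3) by (simp add: at_within_Icc_at)
  then show ?thesis by (simp add: has_real_derivative_iff_has_vector_derivative)
qed

lemma ibp:
  fixes f :: "real \<Rightarrow> real"
  assumes ab: "a < b" and fi: "f integrable_on {a..b}" and fc: "continuous_on {a<..<b} f"
    and gi: "(\<lambda>u. (b-u) * f u) integrable_on {a..b}"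
  shows "integral {a..b} (\<lambda>z. integral {a..z} f) = integral {a..b} (\<lambda>u. (b-u) * f u)"
proof -
  define P where "P z = integral {a..z} f" for z
  define R where "R z = integral {a..z} (\<lambda>u. (b-u) * f u)" for z
  define H where "H z = R z - (b - z) * P z" for z
  have gc: "continuous_on {a<..<b} (\<lambda>u. (b-u) * f u)"
    by (intro continuous_intros fc)
  have cont: "continuous_on {a..b} H"
    unfolding H_def P_def R_def
    by (intro continuous_intros indefinite_integral_continuous_1 fi gi)
  have der: "(H has_vector_derivative P z) (at z)" if z: "z \<in> {a<..<b}" for z
  proof -
    have dP: "(P has_real_derivative f z) (at z)" unfolding P_def by (rule indef_deriv[OF fi fc z])
    have dR: "(R has_real_derivative (b-z) * f z) (at z)" unfolding R_def by (rule indef_deriv[OF gi gc z])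
    have "(H has_real_derivative ((b-z) * f z - ((-1) * P z + (b - z) * f z))) (at z)"
    proof -
      have d1: "((\<lambda>u. b - u) has_real_derivative (-1)) (at z)"
        using DERIV_diff[OF DERIV_const[of b] DERIV_ident] by simp
      have "((\<lambda>u. R u - (b - u) * P u) has_real_derivative ((b-z) * f z - ((b - z) * f z + (-1) * P z))) (at z)"
        by (rule DERIV_diff[OF dR DERIV_mult'[OF d1 dP]])
      then show ?thesis unfolding H_def by simp
    qed
    then show ?thesis by (simp add: has_real_derivative_iff_has_vector_derivative)
  qed
  have "(P has_integral (H b - H a)) {a..b}"
    by (rule fundamental_theorem_of_calculus_interior[OF _ cont der]) (use ab in auto)
  moreover have "H b - H a = R b" unfolding H_def P_def R_def by simp
  ultimately have e1: "integral {a..b} P = R b" using integral_unique by metis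
  have e2: "P = (\<lambda>z. integral {a..z} f)" by (rule ext) (simp add: P_def)
  from e1 have "integral {a..b} (\<lambda>z. integral {a..z} f) = R b" by (simp only: e2)
  then show ?thesis by (simp only: R_def)
qed

lemma conv3:
  fixes f :: "real \<Rightarrow> real"
  assumes "convex_on {a..b} f" "a \<le> p" "p \<le> q" "q \<le> r" "r \<le> b" "p < r"
  shows "(r-p) * f q \<le> (r-q) * f p + (q-p) * f r"
proof -
  have "convex_on {p..r} f" using assms by (auto intro: convex_on_subset)
  from convex_onD_Icc'[OF this, of q] assms
  have "f q \<le> (f r - f p) / (r - p) * (q - p) + f p" by auto
  then have "(r-p) * f q \<le> (r-p) * ((f r - f p) / (r - p) * (q - p) + f p)"
    using assms by (intro mult_left_mono) auto
  also have "\<dots> = (r-q) * f p + (q-p) * f r" using assms by (simp add: field_simps)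
  finally show ?thesis .
qed

lemma poly2_int:
  fixes g :: "real \<Rightarrow> real"
  assumes "\<And>u. g u = cA + cB*u + cC*u^2" "a \<le> b"
    "v = cA*(b-a) + cB*(b^2-a^2)/2 + cC*(b^3-a^3)/3"
  shows "(g has_integral v) {a..b}"
proof -
  define F where "F u = cA*u + cB*u^2/2 + cC*u^3/3" for u :: real
  have "(g has_integral (F b - F a)) {a..b}"
  proof (rule fundamental_theorem_of_calculus[OF assms(2)])
    fix u assume "u \<in> {a..b}"
    have "(F has_real_derivative (cA + cB*u + cC*u^2)) (at u)"
      unfolding F_def by (rule derivative_eq_intros refl | simp add: power2_eq_square)+
    then show "(F has_vector_derivative g u) (at u within {a..b})"
      by (simp add: assms(1) has_real_derivative_iff_has_vector_derivative has_vector_derivative_at_within)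
  qed
  moreover have "F b - F a = v" unfolding F_def assms(3) by (simp add: field_simps)
  ultimately show ?thesis by simp
qed


lemma halfA:
  fixes f :: "real \<Rightarrow> real"
  assumes ab: "a < b" and cf: "convex_on {a..b} f" and fi: "f integrable_on {a..b}"
    and gi: "(\<lambda>u. (b-u) * f u) integrable_on {a..b}"
  shows "2*(b-a) * integral {a..b} f - 3 * integral {a..b} (\<lambda>u. (b-u) * f u) \<le> (b-a)^2/2 * f b"
proof -
  define h where "h = b - a"
  define z where "z = a + h/3"
  define K where "K = (f b - f z) / (b - z)"
  define w where "w u = 2*h - 3*(b-u)" for u
  define l where "l u = f b - K*(b-u)" for u
  have hpos: "h > 0" using ab by (simp add: h_def)
  have zb: "z < b" "a < z" using ab by (auto simp: z_def h_def field_simps)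
  have pw: "w u * f u \<le> w u * l u" if u: "u \<in> {a..b}" for u
  proof (cases "u \<le> z")
    case True
    have c: "(b-u) * f z \<le> (b-z) * f u + (z-u) * f b"
      using conv3[OF cf, of u z b] u True zb by auto
    have e: "f u - l u = ((b-z) * f u + (z-u) * f b - (b-u) * f z) / (b-z)"
      using zb unfolding l_def K_def by (simp add: field_simps)
    have "f u - l u \<ge> 0" unfolding e using c zb by simp
    moreover have "w u \<le> 0" using True unfolding w_def z_def h_def by (simp add: field_simps)
    ultimately have "w u * (f u - l u) \<le> 0" by (simp add: mult_nonpos_nonneg)
    then show ?thesis by (simp add: algebra_simps)
  next
    case False
    have c: "(b-z) * f u \<le> (b-u) * f z + (u-z) * f b"
      using conv3[OF cf, of z u b] u False zb by auto
    have e: "l u - f u = ((u-z) * f b + (b-u) * f z - (b-z) * f u) / (b-z)"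
      using zb unfolding l_def K_def by (simp add: field_simps)
    have "l u - f u \<ge> 0" unfolding e using c zb by simp
    moreover have "w u \<ge> 0" using False unfolding w_def z_def h_def by (simp add: field_simps)
    ultimately have "w u * (l u - f u) \<ge> 0" by simp
    then show ?thesis by (simp add: algebra_simps)
  qed
  have i1: "((\<lambda>u. w u * f u) has_integral (2*h * integral {a..b} f - 3 * integral {a..b} (\<lambda>u. (b-u) * f u))) {a..b}"
  proof -
    have "((\<lambda>u. 2*h * f u - 3 * ((b-u) * f u)) has_integral (2*h * integral {a..b} f - 3 * integral {a..b} (\<lambda>u. (b-u) * f u))) {a..b}"
      by (intro has_integral_diff has_integral_mult_right integrable_integral fi gi)
    moreover have "(\<lambda>u. 2*h * f u - 3 * ((b-u) * f u)) = (\<lambda>u. w u * f u)"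
      by (rule ext) (simp add: w_def algebra_simps)
    ultimately show ?thesis by simp
  qed
  have w1: "(w has_integral (h^2/2)) {a..b}"
    by (rule poly2_int[where cA="2*h-3*b" and cB=3 and cC=0]) (use ab in \<open>auto simp: w_def h_def power2_eq_square power3_eq_cube field_simps\<close>)
  have w2: "((\<lambda>u. w u * (b-u)) has_integral 0) {a..b}"
    by (rule poly2_int[where cA="(2*h-3*b)*b" and cB="6*b-2*h" and cC="-3"]) (use ab in \<open>auto simp: w_def h_def power2_eq_square power3_eq_cube field_simps\<close>)
  have i2: "((\<lambda>u. w u * l u) has_integral (f b * (h^2/2) - K * 0)) {a..b}"
  proof -
    have "((\<lambda>u. f b * w u - K * (w u * (b-u))) has_integral (f b * (h^2/2) - K * 0)) {a..b}"
      by (intro has_integral_diff has_integral_mult_right w1 w2)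
    moreover have "(\<lambda>u. f b * w u - K * (w u * (b-u))) = (\<lambda>u. w u * l u)"
      by (rule ext) (simp add: l_def algebra_simps)
    ultimately show ?thesis by simp
  qed
  have "2*h * integral {a..b} f - 3 * integral {a..b} (\<lambda>u. (b-u) * f u) \<le> f b * (h^2/2) - K * 0"
    by (rule has_integral_le[OF i1 i2 pw])
  then show ?thesis by (simp add: h_def mult.commute)
qed

lemma halfB:
  fixes f :: "real \<Rightarrow> real"
  assumes ab: "a < b" and cf: "convex_on {a..b} f" and fi: "f integrable_on {a..b}"
    and gi: "(\<lambda>u. (b-u) * f u) integrable_on {a..b}"
  shows "3 * integral {a..b} (\<lambda>u. (b-u) * f u) - (b-a) * integral {a..b} f \<le> (b-a)^2/2 * f a"
proof -
  define h where "h = b - a"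
  define z where "z = a + 2*h/3"
  define K where "K = (f z - f a) / (z - a)"
  define w where "w u = 3*(b-u) - h" for u
  define l where "l u = f a + K*(u-a)" for u
  have hpos: "h > 0" using ab by (simp add: h_def)
  have zb: "z < b" "a < z" using ab by (auto simp: z_def h_def field_simps)
  have pw: "w u * f u \<le> w u * l u" if u: "u \<in> {a..b}" for u
  proof (cases "u \<le> z")
    case True
    have c: "(z-a) * f u \<le> (z-u) * f a + (u-a) * f z"
      using conv3[OF cf, of a u z] u True zb by auto
    have e: "l u - f u = ((z-u) * f a + (u-a) * f z - (z-a) * f u) / (z-a)"
      using zb unfolding l_def K_def by (simp add: field_simps)
    have "l u - f u \<ge> 0" unfolding e using c zb by simp
    moreover have "w u \<ge> 0" using True unfolding w_def z_def h_def by (simp add: field_simps)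
    ultimately have "w u * (l u - f u) \<ge> 0" by simp
    then show ?thesis by (simp add: algebra_simps)
  next
    case False
    have c: "(u-a) * f z \<le> (u-z) * f a + (z-a) * f u"
      using conv3[OF cf, of a z u] u False zb by auto
    have e: "f u - l u = ((z-a) * f u + (u-z) * f a - (u-a) * f z) / (z-a)"
      using zb unfolding l_def K_def by (simp add: field_simps)
    have "f u - l u \<ge> 0" unfolding e using c zb by simp
    moreover have "w u \<le> 0" using False unfolding w_def z_def h_def by (simp add: field_simps)
    ultimately have "w u * (f u - l u) \<le> 0" by (simp add: mult_nonpos_nonneg)
    then show ?thesis by (simp add: algebra_simps)
  qed
  have i1: "((\<lambda>u. w u * f u) has_integral (3 * integral {a..b} (\<lambda>u. (b-u) * f u) - h * integral {a..b} f)) {a..b}"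
  proof -
    have "((\<lambda>u. 3 * ((b-u) * f u) - h * f u) has_integral (3 * integral {a..b} (\<lambda>u. (b-u) * f u) - h * integral {a..b} f)) {a..b}"
      by (intro has_integral_diff has_integral_mult_right integrable_integral fi gi)
    moreover have "(\<lambda>u. 3 * ((b-u) * f u) - h * f u) = (\<lambda>u. w u * f u)"
      by (rule ext) (simp add: w_def algebra_simps)
    ultimately show ?thesis by simp
  qed
  have w1: "(w has_integral (h^2/2)) {a..b}"
    by (rule poly2_int[where cA="3*b-h" and cB="-3" and cC=0]) (use ab in \<open>auto simp: w_def h_def power2_eq_square power3_eq_cube field_simps\<close>)
  have w2: "((\<lambda>u. w u * (u-a)) has_integral 0) {a..b}"
    by (rule poly2_int[where cA="-(3*b-h)*a" and cB="3*b-h+3*a" and cC="-3"]) (use ab in \<open>auto simp: w_def h_def power2_eq_square power3_eq_cube field_simps\<close>)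
  have i2: "((\<lambda>u. w u * l u) has_integral (f a * (h^2/2) + K * 0)) {a..b}"
  proof -
    have "((\<lambda>u. f a * w u + K * (w u * (u-a))) has_integral (f a * (h^2/2) + K * 0)) {a..b}"
      by (intro has_integral_add has_integral_mult_right w1 w2)
    moreover have "(\<lambda>u. f a * w u + K * (w u * (u-a))) = (\<lambda>u. w u * l u)"
      by (rule ext) (simp add: l_def algebra_simps)
    ultimately show ?thesis by simp
  qed
  have "3 * integral {a..b} (\<lambda>u. (b-u) * f u) - h * integral {a..b} f \<le> f a * (h^2/2) + K * 0"
    by (rule has_integral_le[OF i1 i2 pw])
  then show ?thesis by (simp add: h_def mult.commute)
qed

lemma convex_bounded:
  fixes f :: "real \<Rightarrow> real"
  assumes xy: "x < y" and cf: "convex_on {x..y} f" and u: "u \<in> {x..y}"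
  shows "\<bar>f u\<bar> \<le> \<bar>max (f x) (f y)\<bar> + 2 * \<bar>f ((x+y)/2)\<bar>"
proof -
  define M where "M = max (f x) (f y)"
  have up: "f v \<le> M" if v: "v \<in> {x..y}" for v
  proof -
    have "(y-x) * f v \<le> (y-v) * f x + (v-x) * f y" using conv3[OF cf, of x v y] v xy by auto
    also have "\<dots> \<le> (y-v) * M + (v-x) * M"
      using v by (intro add_mono mult_left_mono) (auto simp: M_def)
    finally have "(y-x) * f v \<le> (y-x) * M" by (simp add: algebra_simps)
    then show ?thesis using xy by simp
  qed
  define m where "m = (x+y)/2"
  define v where "v = x + y - u"
  have vin: "v \<in> {x..y}" using u by (auto simp: v_def)
  have low: "2 * f m \<le> f u + f v"
  proof (cases "u < m")
    case True
    have "(v-u) * f m \<le> (v-m) * f u + (m-u) * f v"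
      using conv3[OF cf, of u m v] u True by (auto simp: m_def v_def)
    moreover have "v - m = m - u" "v - u = 2*(m-u)" by (auto simp: m_def v_def field_simps)
    ultimately have "(m-u) * (2 * f m) \<le> (m-u) * (f u + f v)" by (simp add: algebra_simps)
    then show ?thesis using True by simp
  next
    case False
    show ?thesis
    proof (cases "u = m")
      case True then have "v = m" by (simp add: v_def m_def field_simps)
      with True show ?thesis by simp
    next
      case F2: False
      with False have um: "m < u" by simp
      have c: "(u-v) * f m \<le> (u-m) * f v + (m-v) * f u"
        using conv3[OF cf, of v m u] u um by (auto simp: m_def v_def)
      have e: "m - v = u - m" "u - v = 2*(u-m)" by (auto simp: m_def v_def field_simps)
      have "(u-m) * (2 * f m) \<le> (u-m) * (f u + f v)" using c unfolding e by (simp add: algebra_simps)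
      then show ?thesis using um by simp
    qed
  qed
  have "f u \<le> M" using up u by simp
  moreover have "f v \<le> M" using up vin by simp
  ultimately show ?thesis using low unfolding M_def[symmetric] m_def[symmetric] by linarith
qed

theorem corollary1:
  fixes f :: "real \<Rightarrow> real" and x y :: real
  assumes "x < y"
    and "convex_on {x..y} f"
  shows "(3 / (y - x)^2 * integral {x..y} (\<lambda>t. integral {x..y} (\<lambda>s. f ((s + t) / 2)))
           \<le> 2 / (y - x) * integral {x..y} f + f ((x + y) / 2))
    \<and> (4 / (y - x) * integral {x..y} f
           \<le> 3 / (y - x)^2 * integral {x..y} (\<lambda>t. integral {x..y} (\<lambda>s. f ((s + t) / 2)))
              + (f x + f y) / 2)"
proof -
  define m where "m = (x+y)/2"
  define B where "B = \<bar>max (f x) (f y)\<bar> + 2 * \<bar>f m\<bar>"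
  have xm: "x < m" "m < y" using assms(1) by (auto simp: m_def field_simps)
  have bnd: "\<And>u. u \<in> {x..y} \<Longrightarrow> \<bar>f u\<bar> \<le> B"
    using convex_bounded[OF assms] unfolding B_def m_def by blast
  have B0: "B \<ge> 0" unfolding B_def by simp
  have fc: "continuous_on {x<..<y} f"
    by (rule convex_on_continuous) (auto intro: convex_on_subset[OF assms(2)])
  have ctn: "\<And>a b. x \<le> a \<Longrightarrow> b \<le> y \<Longrightarrow> continuous_on {a<..<b} f"
    by (rule continuous_on_subset[OF fc]) auto
  have cvx: "\<And>a b. x \<le> a \<Longrightarrow> b \<le> y \<Longrightarrow> convex_on {a..b} f"
    by (rule convex_on_subset[OF assms(2)]) auto
  have intg: "\<And>a b. x \<le> a \<Longrightarrow> a \<le> b \<Longrightarrow> b \<le> y \<Longrightarrow> f integrable_on {a..b}"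
    by (rule bdd_cont_integrable[where B=B]) (auto intro!: ctn bnd)
  have intg2: "(\<lambda>u. (b-u) * f u) integrable_on {a..b}" if "x \<le> a" "a \<le> b" "b \<le> y" for a b
  proof (rule bdd_cont_integrable[where B="(y-x)*B"])
    show "continuous_on {a<..<b} (\<lambda>u. (b-u) * f u)" using that by (intro continuous_intros ctn)
    fix u assume u: "u \<in> {a..b}"
    have "\<bar>(b-u) * f u\<bar> = \<bar>b-u\<bar> * \<bar>f u\<bar>" by (simp add: abs_mult)
    also have "\<dots> \<le> (y-x) * B" using u that by (intro mult_mono bnd) auto
    finally show "\<bar>(b-u) * f u\<bar> \<le> (y-x) * B" .
  qed (use that in auto)
  define I1 where "I1 = integral {x..m} f"
  define I2 where "I2 = integral {m..y} f"
  define J1 where "J1 = integral {x..m} (\<lambda>u. (m-u) * f u)"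
  define J2 where "J2 = integral {m..y} (\<lambda>u. (y-u) * f u)"
  have A1: "2*(m-x) * I1 - 3 * J1 \<le> (m-x)^2/2 * f m"
    unfolding I1_def J1_def using xm by (intro halfA cvx intg intg2) auto
  have B1: "3 * J1 - (m-x) * I1 \<le> (m-x)^2/2 * f x"
    unfolding I1_def J1_def using xm by (intro halfB cvx intg intg2) auto
  have A2: "2*(y-m) * I2 - 3 * J2 \<le> (y-m)^2/2 * f y"
    unfolding I2_def J2_def using xm by (intro halfA cvx intg intg2) auto
  have B2: "3 * J2 - (y-m) * I2 \<le> (y-m)^2/2 * f m"
    unfolding I2_def J2_def using xm by (intro halfB cvx intg intg2) auto
  have Isplit: "integral {x..y} f = I1 + I2"
    unfolding I1_def I2_def using xm by (intro Henstock_Kurzweil_Integration.integral_combine[symmetric] intg) auto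
  define P where "P = (\<lambda>z. integral {x..z} f)"
  have inner: "integral {x..y} (\<lambda>s. f ((s + t) / 2)) = 2 * (P ((y+t)/2) - P ((x+t)/2))"
    if t: "t \<in> {x..y}" for t
  proof -
    define a where "a = (x+t)/2"
    define b where "b = (y+t)/2"
    have ab: "x \<le> a" "a \<le> b" "b \<le> y" using t assms(1) by (auto simp: a_def b_def)
    have hi: "(f has_integral integral {a..b} f) (cbox a b)"
      using intg[OF ab] by (simp add: cbox_interval integrable_integral)
    from has_integral_affinity'[OF hi, of "1/2" "t/2"]
    have "((\<lambda>s. f ((1/2) *\<^sub>R s + t/2)) has_integral (integral {a..b} f /\<^sub>R (1/2) ^ DIM(real)))
           (cbox ((a - t/2) /\<^sub>R (1/2)) ((b - t/2) /\<^sub>R (1/2)))" by simp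
    moreover have "(a - t/2) /\<^sub>R (1/2) = x" "(b - t/2) /\<^sub>R (1/2) = y"
      by (auto simp: a_def b_def field_simps)
    moreover have "(\<lambda>s. f ((1/2) *\<^sub>R s + t/2)) = (\<lambda>s. f ((s + t) / 2))"
      by (rule ext) (simp add: field_simps)
    ultimately have "((\<lambda>s. f ((s + t) / 2)) has_integral (2 * integral {a..b} f)) {x..y}"
      by (simp add: cbox_interval integrable_integral)
    then have "integral {x..y} (\<lambda>s. f ((s + t) / 2)) = 2 * integral {a..b} f"
      by (simp add: integral_unique)
    moreover have "integral {x..a} f + integral {a..b} f = integral {x..b} f"
      using ab by (intro Henstock_Kurzweil_Integration.integral_combine intg) auto
    ultimately show ?thesis unfolding P_def a_def b_def by simp
  qed
  have Pc: "continuous_on {x..y} P" unfolding P_def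
    by (rule indefinite_integral_continuous_1[OF intg]) (use assms(1) in auto)
  have o1: "((\<lambda>t. P ((y+t)/2)) has_integral (2 * integral {m..y} P)) {x..y}"
  proof -
    have "P integrable_on {m..y}"
      by (rule integrable_continuous_interval, rule continuous_on_subset[OF Pc]) (use xm in auto)
    then have hi: "(P has_integral integral {m..y} P) (cbox m y)" by (simp add: cbox_interval integrable_integral)
    from has_integral_affinity'[OF hi, of "1/2" "y/2"]
    have "((\<lambda>s. P ((1/2) *\<^sub>R s + y/2)) has_integral (integral {m..y} P /\<^sub>R (1/2) ^ DIM(real)))
           (cbox ((m - y/2) /\<^sub>R (1/2)) ((y - y/2) /\<^sub>R (1/2)))" by simp
    moreover have "(m - y/2) /\<^sub>R (1/2) = x" "(y - y/2) /\<^sub>R (1/2) = y"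
      by (auto simp: m_def field_simps)
    moreover have "(\<lambda>s. P ((1/2) *\<^sub>R s + y/2)) = (\<lambda>t. P ((y+t)/2))"
      by (rule ext) (simp add: field_simps)
    ultimately show ?thesis by (simp add: cbox_interval integrable_integral)
  qed
  have o2: "((\<lambda>t. P ((x+t)/2)) has_integral (2 * integral {x..m} P)) {x..y}"
  proof -
    have "P integrable_on {x..m}"
      by (rule integrable_continuous_interval, rule continuous_on_subset[OF Pc]) (use xm in auto)
    then have hi: "(P has_integral integral {x..m} P) (cbox x m)" by (simp add: cbox_interval integrable_integral)
    from has_integral_affinity'[OF hi, of "1/2" "x/2"]
    have "((\<lambda>s. P ((1/2) *\<^sub>R s + x/2)) has_integral (integral {x..m} P /\<^sub>R (1/2) ^ DIM(real)))
           (cbox ((x - x/2) /\<^sub>R (1/2)) ((m - x/2) /\<^sub>R (1/2)))" by simp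
    moreover have "(x - x/2) /\<^sub>R (1/2) = x" "(m - x/2) /\<^sub>R (1/2) = y"
      by (auto simp: m_def field_simps)
    moreover have "(\<lambda>s. P ((1/2) *\<^sub>R s + x/2)) = (\<lambda>t. P ((x+t)/2))"
      by (rule ext) (simp add: field_simps)
    ultimately show ?thesis by (simp add: cbox_interval integrable_integral)
  qed
  have "((\<lambda>t. 2 * (P ((y+t)/2) - P ((x+t)/2))) has_integral
          (2 * (2 * integral {m..y} P - 2 * integral {x..m} P))) {x..y}"
    by (intro has_integral_mult_right has_integral_diff o1 o2)
  then have DD0: "integral {x..y} (\<lambda>t. integral {x..y} (\<lambda>s. f ((s + t) / 2)))
      = 4 * (integral {m..y} P - integral {x..m} P)"
    using inner by (subst integral_cong[where g="\<lambda>t. 2 * (P ((y+t)/2) - P ((x+t)/2))"])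
      (auto simp: integral_unique)
  have PJ1: "integral {x..m} P = J1"
    unfolding P_def J1_def using xm by (intro ibp intg ctn intg2) auto
  define Q where "Q = (\<lambda>z. integral {m..z} f)"
  have PQ: "P z = I1 + Q z" if "z \<in> {m..y}" for z
    unfolding P_def Q_def I1_def using that xm
    by (intro Henstock_Kurzweil_Integration.integral_combine[symmetric] intg) auto
  have Qi: "Q integrable_on {m..y}" unfolding Q_def
    by (intro integrable_continuous_interval indefinite_integral_continuous_1 intg) (use xm in auto)
  have QJ2: "integral {m..y} Q = J2"
    unfolding Q_def J2_def using xm by (intro ibp intg ctn intg2) auto
  have "integral {m..y} P = integral {m..y} (\<lambda>z. I1 + Q z)"
    using PQ by (rule integral_cong)
  also have "\<dots> = (y-m) * I1 + J2"
  proof -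
    have "integral {m..y} (\<lambda>z. I1 + Q z) = integral {m..y} (\<lambda>z. I1) + integral {m..y} Q"
      by (rule Henstock_Kurzweil_Integration.integral_add) (auto simp: Qi)
    then show ?thesis using xm by (simp add: QJ2)
  qed
  finally have PJ2: "integral {m..y} P = (y-m) * I1 + J2" .
  define DD where "DD = integral {x..y} (\<lambda>t. integral {x..y} (\<lambda>s. f ((s + t) / 2)))"
  define hh where "hh = (y-x)/2"
  have DD: "DD = 4 * (hh * I1 + J2 - J1)"
    unfolding DD_def DD0 PJ1 PJ2 by (simp add: hh_def m_def field_simps)
  have mx: "m - x = hh" "y - m = hh" "y - x = 2*hh" by (auto simp: hh_def m_def field_simps)
  have hh0: "hh > 0" using assms(1) by (simp add: hh_def)
  have g1: "3 * DD \<le> 2 * (2*hh) * (I1+I2) + (2*hh)^2 * f m"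
    using A1 B2 unfolding DD mx by (simp add: power2_eq_square algebra_simps)
  have g2: "4 * (2*hh) * (I1+I2) \<le> 3 * DD + (2*hh)^2 * (f x + f y) / 2"
  proof -
    have "4 * (2*hh) * (I1+I2) - (3 * DD + (2*hh)^2 * (f x + f y) / 2)
        = 4 * ((3 * J1 - hh * I1 - hh^2/2 * f x) + (2*hh * I2 - 3 * J2 - hh^2/2 * f y))"
      unfolding DD by (simp add: power2_eq_square algebra_simps)
    also have "\<dots> \<le> 0"
    proof -
      have a: "3 * J1 - hh * I1 - hh^2/2 * f x \<le> 0" using B1 unfolding mx by simp
      have b: "2*hh * I2 - 3 * J2 - hh^2/2 * f y \<le> 0" using A2 unfolding mx by simp
      show ?thesis using mult_nonneg_nonpos[of 4, OF _ add_nonpos_nonpos[OF a b]] by simp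
    qed
    finally show ?thesis by simp
  qed
  show ?thesis
    unfolding DD_def[symmetric] Isplit m_def[symmetric] mx
  proof
    have "3 / (2*hh)^2 * DD - (2 / (2*hh) * (I1+I2) + f m)
          = (3 * DD - (2 * (2*hh) * (I1+I2) + (2*hh)^2 * f m)) / (2*hh)^2"
      using hh0 by (simp add: field_simps power2_eq_square eval_nat_numeral)
    also have "\<dots> \<le> 0" using g1 hh0 by (intro divide_nonpos_pos) auto
    finally show "3 / (2*hh)^2 * DD \<le> 2 / (2*hh) * (I1+I2) + f m" by simp
  next
    have "4 / (2*hh) * (I1+I2) - (3 / (2*hh)^2 * DD + (f x + f y) / 2)
          = (4 * (2*hh) * (I1+I2) - (3 * DD + (2*hh)^2 * (f x + f y) / 2)) / (2*hh)^2"
      using hh0 by (simp add: field_simps power2_eq_square eval_nat_numeral)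
    also have "\<dots> \<le> 0" using g2 hh0 by (intro divide_nonpos_pos) auto
    finally show "4 / (2*hh) * (I1+I2) \<le> 3 / (2*hh)^2 * DD + (f x + f y) / 2" by simp
  qed
qed

end
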